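(* For every $n\ge1$, $N(0)=\#\Big\{(k_1,\dots,k_n)\in\mathbb{Z}^n:0\le k_i\le s_i-2,\ \sum_{i=1}^n\frac{k_i}{s_i}\le1\Big\}-1$.
   Context: Sylvester numbers: $s_0=2$, $s_{k+1}=1+\prod_{i=0}^ks_i$. Fix $n\ge1$, $d=\prod_{i=0}^ns_i$, $a_i=d/s_i$ for $0\le i\le n$, $a_{n+1}=1$. For $\ell\in\{0,\dots,d-1\}$ let $\tilde\theta_i(\ell)=\{\ell/s_i\}$ (fractional part) for $0\le i\le n$ and $\tilde\theta_{n+1}(\ell)=\ell/d$; $T_0(\ell)=\{i\in\{0,\dots,n+1\}:\tilde\theta_i(\ell)=0\}$, $T_1(\ell)=\{0,\dots,n+1\}\setminus T_0(\ell)$; $A(\ell)=\sum_{i\in T_1(\ell)}(\frac d2-a_i)$, $B(\ell)=\sum_{i\in T_1(\ell)}(d\tilde\theta_i(\ell)-\frac d2)$. $N(\ell)$ is the number of integer tuples $(k_i)_{i\in T_0(\ell)}$ with $0\le k_i\le s_i-2$ for $0\le i\le n$ and $0\le k_{n+1}\le d-2$ (if $n+1\in T_0(\ell)$), such that $A(\ell)+\sum_{i\in T_0(\ell)}k_ia_i=d$ and $B(\ell)=0$ (so $N(\ell)=0$ if $B(\ell)\ne0$). *)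

theory Defs
  imports Complex_Main
begin

function sylv :: "nat \<Rightarrow> nat" where
  "sylv k = (if k = 0 then 2 else 1 + (\<Prod>i<k. sylv i))"
  by auto
termination
  by (relation "measure id") auto

definition dd :: "nat \<Rightarrow> nat" where
  "dd n = (\<Prod>i\<le>n. sylv i)"

definition aa :: "nat \<Rightarrow> nat \<Rightarrow> nat" where
  "aa n i = (if i \<le> n then dd n div sylv i else 1)"

definition theta :: "nat \<Rightarrow> nat \<Rightarrow> nat \<Rightarrow> real" where
  "theta n i l = (if i \<le> n then frac (real l / real (sylv i)) else real l / real (dd n))"

definition T0 :: "nat \<Rightarrow> nat \<Rightarrow> nat set" where
  "T0 n l = {i \<in> {0..n+1}. theta n i l = 0}"

definition T1 :: "nat \<Rightarrow> nat \<Rightarrow> nat set" where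
  "T1 n l = {0..n+1} - T0 n l"

definition AA :: "nat \<Rightarrow> nat \<Rightarrow> real" where
  "AA n l = (\<Sum>i\<in>T1 n l. real (dd n) / 2 - real (aa n i))"

definition BB :: "nat \<Rightarrow> nat \<Rightarrow> real" where
  "BB n l = (\<Sum>i\<in>T1 n l. real (dd n) * theta n i l - real (dd n) / 2)"

definition ub :: "nat \<Rightarrow> nat \<Rightarrow> int" where
  "ub n i = (if i \<le> n then int (sylv i) - 2 else int (dd n) - 2)"

text \<open>Tuples (k_i) indexed by T0 are represented as functions nat => int
  vanishing outside T0.\<close>
definition NN :: "nat \<Rightarrow> nat \<Rightarrow> nat" where
  "NN n l = card {k :: nat \<Rightarrow> int.
     (\<forall>i. i \<notin> T0 n l \<longrightarrow> k i = 0) \<and>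
     (\<forall>i\<in>T0 n l. 0 \<le> k i \<and> k i \<le> ub n i) \<and>
     AA n l + (\<Sum>i\<in>T0 n l. real_of_int (k i) * real (aa n i)) = real (dd n) \<and>
     BB n l = 0}"

end

theory Submission imports Defs "HOL-Library.FuncSet" begin

declare sylv.simps[simp del]

lemma sylv_0: "sylv 0 = 2" by (simp add: sylv.simps[of 0])

lemma sylv_ge2: "sylv i \<ge> 2"
proof (induction i rule: less_induct)
  case (less i)
  show ?case
  proof (cases "i = 0")
    case True thus ?thesis by (simp add: sylv_0)
  next
    case False
    have "(\<Prod>j<i. sylv j) \<ge> 1"
      by (rule prod_ge_1) (use less in force)
    thus ?thesis using False by (simp add: sylv.simps[of i])
  qed
qed

lemma sylv_dvd: "i \<le> n \<Longrightarrow> sylv i dvd dd n"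
  unfolding dd_def by (rule dvd_prodI) auto

lemma aa_eq: "i \<le> n \<Longrightarrow> aa n i = (\<Prod>j\<in>{..n}-{i}. sylv j)"
proof -
  assume i: "i \<le> n"
  have "dd n = sylv i * (\<Prod>j\<in>{..n}-{i}. sylv j)"
    unfolding dd_def using i by (subst prod.remove[of _ i]) auto
  moreover have "sylv i > 0" using sylv_ge2[of i] by simp
  ultimately show ?thesis unfolding aa_def using i by simp
qed

lemma aa_ge2: "1 \<le> i \<Longrightarrow> i \<le> n \<Longrightarrow> aa n i \<ge> 2"
proof -
  assume i: "1 \<le> i" "i \<le> n"
  have "(\<Prod>j\<in>{..n}-{i}. sylv j) = sylv 0 * (\<Prod>j\<in>{..n}-{i}-{0}. sylv j)"
    using i by (subst prod.remove[of _ 0]) auto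
  moreover have "(\<Prod>j\<in>{..n}-{i}-{0}. sylv j) \<ge> 1"
    by (rule prod_ge_1) (metis sylv_ge2 one_le_numeral order_trans)
  ultimately have "(\<Prod>j\<in>{..n}-{i}. sylv j) \<ge> 2" by (simp add: sylv_0)
  thus ?thesis using aa_eq i by simp
qed

lemma aa_real: "i \<le> n \<Longrightarrow> real (aa n i) = real (dd n) / real (sylv i)"
proof -
  assume i: "i \<le> n"
  have "sylv i > 0" using sylv_ge2[of i] by simp
  thus ?thesis using sylv_dvd[OF i] unfolding aa_def using i
    by (simp add: real_of_nat_div)
qed

lemma aa_last: "aa n (Suc n) = 1" by (simp add: aa_def)

lemma dd_pos: "dd n > 0"
  unfolding dd_def using sylv_ge2 by (simp add: prod_pos) (metis not_numeral_le_zero neq0_conv)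

lemma sum_split: "sum f {0..Suc n} = f 0 + sum f {1..n} + f (Suc n)"
proof -
  have "{0..Suc n} = insert 0 (insert (Suc n) {1..n})" by auto
  thus ?thesis by (simp add: algebra_simps)
qed

lemma T0_0: "T0 n 0 = {0..n+1}" by (auto simp: T0_def theta_def)
lemma AA_0: "AA n 0 = 0" by (simp add: AA_def T1_def T0_0)
lemma BB_0: "BB n 0 = 0" by (simp add: BB_def T1_def T0_0)

lemma sum_real_int: "(\<Sum>i\<in>A. real_of_int (k i) * real (aa n i)) = real_of_int (\<Sum>i\<in>A. k i * int (aa n i))"
  by simp

theorem lemma6p7:
  fixes n :: nat
  assumes "n \<ge> 1"
  shows "int (NN n 0) =
    int (card {k :: nat \<Rightarrow> int.
       (\<forall>i. i \<notin> {1..n} \<longrightarrow> k i = 0) \<and>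
       (\<forall>i\<in>{1..n}. 0 \<le> k i \<and> k i \<le> int (sylv i) - 2) \<and>
       (\<Sum>i\<in>{1..n}. real_of_int (k i) / real (sylv i)) \<le> 1}) - 1"
proof -
  define \<sigma> where "\<sigma> k = (\<Sum>i\<in>{1..n}. k i * int (aa n i))" for k :: "nat \<Rightarrow> int"
  define R where "R = {k :: nat \<Rightarrow> int.
       (\<forall>i. i \<notin> {1..n} \<longrightarrow> k i = 0) \<and>
       (\<forall>i\<in>{1..n}. 0 \<le> k i \<and> k i \<le> int (sylv i) - 2) \<and>
       (\<Sum>i\<in>{1..n}. real_of_int (k i) / real (sylv i)) \<le> 1}"
  define S where "S = {k :: nat \<Rightarrow> int.
     (\<forall>i. i \<notin> {0..n+1} \<longrightarrow> k i = 0) \<and>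
     (\<forall>i\<in>{0..n+1}. 0 \<le> k i \<and> k i \<le> ub n i) \<and>
     (\<Sum>i\<in>{0..n+1}. real_of_int (k i) * real (aa n i)) = real (dd n)}"
  have NN: "NN n 0 = card S" unfolding NN_def S_def by (simp add: T0_0 AA_0 BB_0)
  have key: "(\<Sum>i\<in>{1..n}. real_of_int (k i) / real (sylv i)) \<le> 1 \<longleftrightarrow> \<sigma> k \<le> int (dd n)" for k
  proof -
    have dp: "real (dd n) > 0" using dd_pos[of n] by simp
    have "real (dd n) * (\<Sum>i\<in>{1..n}. real_of_int (k i) / real (sylv i))
        = (\<Sum>i\<in>{1..n}. real_of_int (k i) * real (aa n i))"
      unfolding sum_distrib_left by (rule sum.cong) (auto simp: aa_real simp del: sylv.simps)
    also have "\<dots> = real_of_int (\<sigma> k)" unfolding \<sigma>_def by simp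
    finally have e: "real (dd n) * (\<Sum>i\<in>{1..n}. real_of_int (k i) / real (sylv i)) = real_of_int (\<sigma> k)" .
    have "(\<Sum>i\<in>{1..n}. real_of_int (k i) / real (sylv i)) \<le> 1 \<longleftrightarrow>
       real (dd n) * (\<Sum>i\<in>{1..n}. real_of_int (k i) / real (sylv i)) \<le> real (dd n) * 1"
      using dp by (simp only: mult_le_cancel_left_pos)
    also have "\<dots> \<longleftrightarrow> real_of_int (\<sigma> k) \<le> real_of_int (int (dd n))" using e by simp
    also have "\<dots> \<longleftrightarrow> \<sigma> k \<le> int (dd n)" by (simp only: of_int_le_iff)
    finally show ?thesis .
  qed
  define h where "h k = k(Suc n := int (dd n) - \<sigma> k)" for k :: "nat \<Rightarrow> int"
  have fin: "finite R"
  proof -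
    have "R \<subseteq> (\<lambda>f i. if i \<in> {1..n} then f i else 0) ` (PiE {1..n} (\<lambda>i. {0..int (sylv i)}))"
    proof
      fix k assume k: "k \<in> R"
      let ?f = "restrict k {1..n}"
      have "?f \<in> PiE {1..n} (\<lambda>i. {0..int (sylv i)})" using k unfolding R_def by auto
      moreover have "k = (\<lambda>i. if i \<in> {1..n} then ?f i else 0)" using k unfolding R_def by auto
      ultimately show "k \<in> (\<lambda>f i. if i \<in> {1..n} then f i else 0) ` (PiE {1..n} (\<lambda>i. {0..int (sylv i)}))"
        by blast
    qed
    moreover have "finite (PiE {1..n} (\<lambda>i. {0..int (sylv i)}))" by (rule finite_PiE) auto
    ultimately show ?thesis using finite_subset by blast
  qed
  have z: "(\<lambda>_::nat. 0::int) \<in> R" unfolding R_def using sylv_ge2 by (auto simp: algebra_simps) 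
  have hs: "h k i = k i" if "i \<noteq> Suc n" for k i using that by (simp add: h_def)
  have inj: "inj_on h (R - {\<lambda>_. 0})"
  proof
    fix x y assume x: "x \<in> R - {\<lambda>_. 0}" and y: "y \<in> R - {\<lambda>_. 0}" and e: "h x = h y"
    show "x = y"
    proof
      fix i show "x i = y i"
      proof (cases "i = Suc n")
        case True thus ?thesis using x y unfolding R_def by auto
      next
        case False thus ?thesis using hs[of i x] hs[of i y] e by metis
      qed
    qed
  qed
  have img: "h ` (R - {\<lambda>_. 0}) = S"
  proof
    show "h ` (R - {\<lambda>_. 0}) \<subseteq> S"
    proof
      fix k' assume "k' \<in> h ` (R - {\<lambda>_. 0})"
      then obtain k where kR: "k \<in> R" and k0: "k \<noteq> (\<lambda>_. 0)" and k': "k' = h k" by auto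
      have out: "\<And>i. i \<notin> {1..n} \<Longrightarrow> k i = 0" and bd: "\<And>i. i \<in> {1..n} \<Longrightarrow> 0 \<le> k i \<and> k i \<le> int (sylv i) - 2"
        and le: "\<sigma> k \<le> int (dd n)" using kR key unfolding R_def by auto
      obtain j where "k j \<noteq> 0" using k0 by auto
      hence j: "j \<in> {1..n}" using out by force
      hence j2: "k j \<ge> 1" using bd[of j] \<open>k j \<noteq> 0\<close> by simp
      have "\<sigma> k \<ge> k j * int (aa n j)" unfolding \<sigma>_def
        by (rule member_le_sum) (use j j2 bd in auto)
      moreover have "k j * int (aa n j) \<ge> 1 * 2" using aa_ge2[of j n] j j2 by (intro mult_mono) auto
      ultimately have ge2: "\<sigma> k \<ge> 2" by simp
      have hS: "h k (Suc n) = int (dd n) - \<sigma> k" by (simp add: h_def)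
      have s1: "(\<Sum>i\<in>{1..n}. h k i * int (aa n i)) = \<sigma> k" unfolding \<sigma>_def
        by (rule sum.cong) (auto simp: hs)
      have "(\<Sum>i\<in>{0..Suc n}. h k i * int (aa n i)) = int (dd n)"
        using s1 out[of 0] hs[of 0 k] unfolding sum_split by (simp add: aa_last hS)
      hence sm: "(\<Sum>i\<in>{0..n+1}. real_of_int (h k i) * real (aa n i)) = real (dd n)"
        by (simp only: sum_real_int) simp
      have o: "\<forall>i. i \<notin> {0..n+1} \<longrightarrow> h k i = 0" using out by (auto simp: h_def)
      have b: "\<forall>i\<in>{0..n+1}. 0 \<le> h k i \<and> h k i \<le> ub n i"
      proof
        fix i assume i: "i \<in> {0..n+1}"
        show "0 \<le> h k i \<and> h k i \<le> ub n i"
        proof (cases "i = Suc n")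
          case True thus ?thesis using le ge2 by (simp add: h_def ub_def)
        next
          case False
          show ?thesis
          proof (cases "i = 0")
            case True thus ?thesis using out[of 0] by (simp add: h_def ub_def sylv_0)
          next
            case False
            hence "i \<in> {1..n}" using i \<open>i \<noteq> Suc n\<close> by auto
            thus ?thesis using bd[of i] hs[OF \<open>i \<noteq> Suc n\<close>] by (simp add: ub_def)
          qed
        qed
      qed
      show "k' \<in> S" unfolding S_def k' using o b sm by blast
    qed
  next
    show "S \<subseteq> h ` (R - {\<lambda>_. 0})"
    proof
      fix k assume kS: "k \<in> S"
      have out: "\<And>i. i \<notin> {0..n+1} \<Longrightarrow> k i = 0" and bd: "\<And>i. i \<in> {0..n+1} \<Longrightarrow> 0 \<le> k i \<and> k i \<le> ub n i"
        and sm: "(\<Sum>i\<in>{0..n+1}. real_of_int (k i) * real (aa n i)) = real (dd n)"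
        using kS unfolding S_def by auto
      have k0: "k 0 = 0" using bd[of 0] by (simp add: ub_def sylv_0)
      have "real_of_int (\<Sum>i\<in>{0..n+1}. k i * int (aa n i)) = real_of_int (int (dd n))"
        using sm by (simp only: sum_real_int)
      hence "(\<Sum>i\<in>{0..Suc n}. k i * int (aa n i)) = int (dd n)" by (simp only: of_int_eq_iff) simp
      hence kl: "k (Suc n) = int (dd n) - \<sigma> k" using k0 unfolding \<sigma>_def sum_split by (simp add: aa_last)
      define g where "g = (\<lambda>i. if i \<in> {1..n} then k i else 0)"
      have sg: "\<sigma> g = \<sigma> k" unfolding \<sigma>_def g_def by (rule sum.cong) auto
      have kh: "k = h g"
      proof
        fix i show "k i = h g i"
        proof (cases "i = Suc n")
          case True thus ?thesis using kl sg by (simp add: h_def)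
        next
          case False
          hence "h g i = g i" by (rule hs)
          thus ?thesis using False out k0 unfolding g_def by (cases "i = 0") auto
        qed
      qed
      have ubl: "k (Suc n) \<le> int (dd n) - 2" using bd[of "Suc n"] by (simp add: ub_def)
      have "0 \<le> k (Suc n)" using bd[of "Suc n"] by simp
      hence "\<sigma> g \<le> int (dd n)" using kl sg by simp
      moreover have "\<forall>i\<in>{1..n}. 0 \<le> g i \<and> g i \<le> int (sylv i) - 2"
      proof
        fix i assume i: "i \<in> {1..n}"
        hence "i \<in> {0..n+1}" "i \<le> n" by auto
        thus "0 \<le> g i \<and> g i \<le> int (sylv i) - 2" using bd[of i] i unfolding g_def ub_def by simp
      qed
      moreover have "\<forall>i. i \<notin> {1..n} \<longrightarrow> g i = 0" unfolding g_def by simp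
      ultimately have gR: "g \<in> R" unfolding R_def using key[of g] by blast
      have "g \<noteq> (\<lambda>_. 0)"
      proof
        assume "g = (\<lambda>_. 0)"
        hence "\<sigma> g = 0" unfolding \<sigma>_def by simp
        thus False using kl sg ubl by simp
      qed
      thus "k \<in> h ` (R - {\<lambda>_. 0})" using gR kh by blast
    qed
  qed
  have "card S = card (R - {\<lambda>_. 0})" using card_image[OF inj] img by simp
  also have "\<dots> = card R - 1" using z fin by simp
  finally have "card S = card R - 1" .
  moreover have "card R \<ge> 1" using z fin by (metis One_nat_def Suc_leI card_gt_0_iff empty_iff)
  ultimately show ?thesis unfolding NN R_def[symmetric] by simp
qed

end
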